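(* Let $G$ be a commutative group, $H$ a subgroup, $G'=G/H$ and $\varphi:G\to G'$ the natural homomorphism. Let $U\subset G$ be a nonempty finite set, $V=\varphi(U)$, and $1<p<\infty$. Then \[ \beta_p(U)\ge\beta_p(V)\min_{x\in V}\beta_p\bigl(U\cap\varphi^{-1}(x)\bigr), \] where $\beta_p(V)$ is computed in $G'$ and the other quantities in $G$.
   Context: For a finite set $U$ in a commutative group $K$ and $1<p<\infty$, $\beta_p(U)=\inf_{A,B}\frac{|A+B+U|}{|A|^{1/p}|B|^{1-1/p}}$, the infimum over all nonempty finite $A,B\subset K$. *)

theory Defs
  imports Complex_Main "HOL-Algebra.Coset"
begin

definition beta :: "('a, 'b) monoid_scheme \<Rightarrow> real \<Rightarrow> 'a set \<Rightarrow> real" where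
  "beta K p U =
     (INF AB \<in> {(A, B). A \<subseteq> carrier K \<and> finite A \<and> A \<noteq> {} \<and>
                        B \<subseteq> carrier K \<and> finite B \<and> B \<noteq> {}}.
        real (card (set_mult K (set_mult K (fst AB) (snd AB)) U)) /
        (real (card (fst AB)) powr (1 / p) * real (card (snd AB)) powr (1 - 1 / p)))"

end

theory Submission
  imports Defs "HOL-Analysis.Analysis"
begin

definition gm :: "real \<Rightarrow> real \<Rightarrow> real \<Rightarrow> real" where
  "gm t x y = x powr t * y powr (1 - t)"

lemma gm_nonneg: "0 \<le> gm t x y"
  by (simp add: gm_def)

lemma gm_zero1: "gm t 0 y = 0" by (simp add: gm_def)

lemma gm_mult:
  assumes "0 \<le> a" "0 \<le> b" "0 \<le> c" "0 \<le> d"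
  shows "gm t (a*b) (c*d) = gm t a c * gm t b d"
  using assms by (simp add: gm_def powr_mult)

lemma gm_hom:
  assumes "0 \<le> c" "0 \<le> x" "0 \<le> y"
  shows "gm t (c*x) (c*y) = c * gm t x y"
proof -
  have "gm t (c*x) (c*y) = gm t c c * gm t x y" using assms gm_mult by simp
  moreover have "gm t c c = c"
    using assms by (simp add: gm_def powr_add[symmetric])
  ultimately show ?thesis by simp
qed

lemma gm_mono:
  assumes "0 < t" "t < 1" "0 \<le> x" "x \<le> x'" "0 \<le> y" "y \<le> y'"
  shows "gm t x y \<le> gm t x' y'"
  using assms unfolding gm_def
  by (intro mult_mono powr_mono2) auto

lemma gm_young:
  assumes "0 < t" "t < 1" "0 \<le> x" "0 \<le> y"
  shows "gm t x y \<le> t * x + (1 - t) * y"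
proof -
  have "x powr t * y powr (1 - t) \<le> t * x + (1 - t) * y"
  proof (cases "x = 0 \<or> y = 0")
    case True then show ?thesis using assms by auto
  next
    case False then show ?thesis using Youngs_inequality_0[of t "1-t" x y] assms by auto
  qed
  then show ?thesis by (simp add: gm_def)
qed

lemma gm_superadd:
  assumes "0 < t" "t < 1" "0 \<le> x" "0 \<le> y" "0 \<le> z" "0 \<le> w"
  shows "gm t x z + gm t y w \<le> gm t (x+y) (z+w)"
proof (cases "x + y = 0 \<or> z + w = 0")
  case True
  then have "(x = 0 \<and> y = 0) \<or> (z = 0 \<and> w = 0)" using assms by linarith
  then show ?thesis using assms by (auto simp: gm_def)
next
  case False
  define X where "X = x + y"
  define Z where "Z = z + w"
  have X: "X > 0" and Z: "Z > 0" using False assms by (auto simp: X_def Z_def)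
  have e1: "gm t x z = gm t X Z * gm t (x/X) (z/Z)"
    using gm_mult[of X "x/X" Z "z/Z" t] X Z assms by simp
  have e2: "gm t y w = gm t X Z * gm t (y/X) (w/Z)"
    using gm_mult[of X "y/X" Z "w/Z" t] X Z assms by simp
  have "gm t (x/X) (z/Z) + gm t (y/X) (w/Z) \<le> (t*(x/X) + (1-t)*(z/Z)) + (t*(y/X) + (1-t)*(w/Z))"
    using gm_young[of t "x/X" "z/Z"] gm_young[of t "y/X" "w/Z"] assms X Z by simp
  also have "\<dots> = t * ((x+y)/X) + (1-t)*((z+w)/Z)" by (simp add: algebra_simps add_divide_distrib)
  also have "\<dots> = 1" using X Z by (simp add: X_def Z_def)
  finally have "gm t (x/X) (z/Z) + gm t (y/X) (w/Z) \<le> 1" .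
  then have "gm t X Z * (gm t (x/X) (z/Z) + gm t (y/X) (w/Z)) \<le> gm t X Z"
    using gm_nonneg[of t X Z] by (simp add: mult_left_le)
  then show ?thesis using e1 e2 by (simp add: X_def Z_def distrib_left)
qed


lemma sum_le_card_real:
  assumes "\<forall>i\<in>I. \<mu> i \<le> (1::real)"
  shows "sum \<mu> I \<le> real (card I)"
proof (cases "finite I")
  case True
  have "sum \<mu> I \<le> sum (\<lambda>_. 1) I" using assms by (intro sum_mono) auto
  then show ?thesis by simp
qed simp

lemma weighted:
  fixes E :: "'i \<Rightarrow> 'j \<Rightarrow> 'w set" and \<rho> :: "'i \<Rightarrow> real" and \<sigma> :: "'j \<Rightarrow> real"
    and F :: "'w \<Rightarrow> real"
  assumes t: "0 < t" "t < 1" and b: "0 \<le> b"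
    and fin: "\<And>i j. finite (E i j)"
    and hyp: "\<And>S T. S \<subseteq> I0 \<Longrightarrow> T \<subseteq> J0 \<Longrightarrow>
                 b * gm t (real (card S)) (real (card T)) \<le> real (card (\<Union>i\<in>S. \<Union>j\<in>T. E i j))"
    and rpos: "\<And>i. i \<in> I0 \<Longrightarrow> 0 < \<rho> i"
    and spos: "\<And>j. j \<in> J0 \<Longrightarrow> 0 < \<sigma> j"
    and Fc: "\<And>i j w. i \<in> I0 \<Longrightarrow> j \<in> J0 \<Longrightarrow> w \<in> E i j \<Longrightarrow> gm t (\<rho> i) (\<sigma> j) \<le> F w"
  shows "finite I \<Longrightarrow> finite J \<Longrightarrow> I \<subseteq> I0 \<Longrightarrow> J \<subseteq> J0 \<Longrightarrow>
    \<forall>i\<in>I. 0 \<le> \<mu> i \<and> \<mu> i \<le> 1 \<Longrightarrow> \<forall>j\<in>J. 0 \<le> \<nu> j \<and> \<nu> j \<le> 1 \<Longrightarrow>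
    0 \<le> h \<Longrightarrow> \<forall>i\<in>I. \<forall>j\<in>J. h \<le> gm t (\<rho> i) (\<sigma> j) \<Longrightarrow>
    b * gm t (\<Sum>i\<in>I. \<mu> i * \<rho> i) (\<Sum>j\<in>J. \<nu> j * \<sigma> j)
      + h * (real (card (\<Union>i\<in>I. \<Union>j\<in>J. E i j)) - b * gm t (sum \<mu> I) (sum \<nu> J))
    \<le> (\<Sum>w\<in>(\<Union>i\<in>I. \<Union>j\<in>J. E i j). F w)"
proof (induction "card I + card J" arbitrary: I J \<mu> \<nu> h rule: less_induct)
  case less
  have NPhi: "b * gm t (sum \<mu>' I') (sum \<nu>' J') \<le> real (card (\<Union>i\<in>I'. \<Union>j\<in>J'. E i j))"
    if "I' \<subseteq> I0" "J' \<subseteq> J0" "\<forall>i\<in>I'. 0 \<le> \<mu>' i \<and> \<mu>' i \<le> 1" "\<forall>j\<in>J'. 0 \<le> \<nu>' j \<and> \<nu>' j \<le> 1"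
    for I' J' \<mu>' \<nu>'
  proof -
    have "gm t (sum \<mu>' I') (sum \<nu>' J') \<le> gm t (real (card I')) (real (card J'))"
      using that t by (intro gm_mono sum_nonneg sum_le_card_real) auto
    then have "b * gm t (sum \<mu>' I') (sum \<nu>' J') \<le> b * gm t (real (card I')) (real (card J'))"
      using b by (rule mult_left_mono)
    also have "\<dots> \<le> real (card (\<Union>i\<in>I'. \<Union>j\<in>J'. E i j))" using hyp that by blast
    finally show ?thesis .
  qed
  define W where "W = (\<Union>i\<in>I. \<Union>j\<in>J. E i j)"
  define A where "A = (\<Sum>i\<in>I. \<mu> i * \<rho> i)"
  define C where "C = (\<Sum>j\<in>J. \<nu> j * \<sigma> j)"
  define Phi where "Phi = gm t (sum \<mu> I) (sum \<nu> J)"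
  define Psi where "Psi = gm t A C"
  have finW: "finite W" unfolding W_def using less.prems fin by auto
  have NP: "b * Phi \<le> real (card W)" unfolding Phi_def W_def using NPhi less.prems by blast
  have Fh: "\<forall>w\<in>W. h \<le> F w"
  proof
    fix w assume "w \<in> W"
    then obtain i j where ij: "i \<in> I" "j \<in> J" "w \<in> E i j" unfolding W_def by auto
    then have "gm t (\<rho> i) (\<sigma> j) \<le> F w" using Fc less.prems by blast
    then show "h \<le> F w" using less.prems ij by force
  qed
  have rnn: "0 \<le> \<mu> i * \<rho> i" if "i \<in> I" for i
    using that less.prems rpos[of i] by (intro mult_nonneg_nonneg) auto
  have snn: "0 \<le> \<nu> j * \<sigma> j" if "j \<in> J" for j
    using that less.prems spos[of j] by (intro mult_nonneg_nonneg) auto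
  have A0: "0 \<le> A" unfolding A_def using rnn by (intro sum_nonneg) auto
  have C0: "0 \<le> C" unfolding C_def using snn by (intro sum_nonneg) auto
  show ?case
  proof (cases "A = 0 \<or> C = 0")
    case True
    have "sum \<mu> I = 0 \<or> sum \<nu> J = 0"
    proof (cases "A = 0")
      case True
      have "\<forall>i\<in>I. \<mu> i * \<rho> i = 0"
        using True less.prems rnn unfolding A_def by (subst sum_nonneg_eq_0_iff[symmetric]) auto
      then have "\<forall>i\<in>I. \<mu> i = 0" using rpos less.prems by force
      then show ?thesis by simp
    next
      case False
      then have "C = 0" using \<open>A = 0 \<or> C = 0\<close> by simp
      have "\<forall>j\<in>J. \<nu> j * \<sigma> j = 0"
        using \<open>C = 0\<close> less.prems snn unfolding C_def by (subst sum_nonneg_eq_0_iff[symmetric]) auto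
      then have "\<forall>j\<in>J. \<nu> j = 0" using spos less.prems by force
      then show ?thesis by simp
    qed
    then have "Phi = 0" unfolding Phi_def gm_def using t by auto
    have "Psi = 0" unfolding Psi_def gm_def using True t by auto
    have "real (card W) * h \<le> sum F W" using Fh by (intro sum_bounded_below) auto
    then show ?thesis using \<open>Phi = 0\<close> \<open>Psi = 0\<close>
      unfolding Phi_def[symmetric] Psi_def[symmetric] A_def[symmetric] C_def[symmetric] W_def[symmetric]
      by (simp add: mult.commute)
  next
    case False
    then have Ap: "0 < A" and Cp: "0 < C" using A0 C0 by auto
    have Ine: "I \<noteq> {}" using Ap unfolding A_def by auto
    have Jne: "J \<noteq> {}" using Cp unfolding C_def by auto
    obtain i0 where i0: "i0 \<in> I" "\<forall>i\<in>I. \<rho> i0 \<le> \<rho> i"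
    proof -
      have "Min (\<rho> ` I) \<in> \<rho> ` I" using less.prems Ine by (intro Min_in) auto
      then obtain i0 where "i0 \<in> I" "\<rho> i0 = Min (\<rho> ` I)" by auto
      moreover have "\<forall>i\<in>I. Min (\<rho> ` I) \<le> \<rho> i" using less.prems by auto
      ultimately show ?thesis using that by auto
    qed
    obtain j0 where j0: "j0 \<in> J" "\<forall>j\<in>J. \<sigma> j0 \<le> \<sigma> j"
    proof -
      have "Min (\<sigma> ` J) \<in> \<sigma> ` J" using less.prems Jne by (intro Min_in) auto
      then obtain j0 where "j0 \<in> J" "\<sigma> j0 = Min (\<sigma> ` J)" by auto
      moreover have "\<forall>j\<in>J. Min (\<sigma> ` J) \<le> \<sigma> j" using less.prems by auto
      ultimately show ?thesis using that by auto
    qed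
    define h' where "h' = gm t (\<rho> i0) (\<sigma> j0)"
    have r0: "0 < \<rho> i0" using rpos i0 less.prems by auto
    have s0: "0 < \<sigma> j0" using spos j0 less.prems by auto
    have mu0: "0 \<le> \<mu> i0" "\<mu> i0 \<le> 1" using i0 less.prems by auto
    have nu0: "0 \<le> \<nu> j0" "\<nu> j0 \<le> 1" using j0 less.prems by auto
    have hh': "h \<le> h'" unfolding h'_def using less.prems i0 j0 by auto
    have h'0: "0 \<le> h'" unfolding h'_def by (rule gm_nonneg)
    have h'le: "h' \<le> gm t (\<rho> i) (\<sigma> j)" if "i \<in> I" "j \<in> J" for i j
      unfolding h'_def using that i0 j0 r0 s0 t by (intro gm_mono) auto
    have Fh': "h' \<le> F w" if "w \<in> W" for w
    proof -
      obtain i j where ij: "i \<in> I" "j \<in> J" "w \<in> E i j" using \<open>w \<in> W\<close> unfolding W_def by auto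
      then have "gm t (\<rho> i) (\<sigma> j) \<le> F w" using Fc less.prems by blast
      then show ?thesis using h'le ij by force
    qed
    have Arem: "A = \<mu> i0 * \<rho> i0 + (\<Sum>i\<in>I - {i0}. \<mu> i * \<rho> i)"
      unfolding A_def using i0 less.prems by (simp add: sum.remove)
    have Crem: "C = \<nu> j0 * \<sigma> j0 + (\<Sum>j\<in>J - {j0}. \<nu> j * \<sigma> j)"
      unfolding C_def using j0 less.prems by (simp add: sum.remove)
    have Arest: "0 \<le> (\<Sum>i\<in>I - {i0}. \<mu> i * \<rho> i)"
      using rnn by (intro sum_nonneg) auto
    have Crest: "0 \<le> (\<Sum>j\<in>J - {j0}. \<nu> j * \<sigma> j)"
      using snn by (intro sum_nonneg) auto
    have muI: "sum \<mu> I = \<mu> i0 + sum \<mu> (I - {i0})" using i0 less.prems by (simp add: sum.remove)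
    have nuJ: "sum \<nu> J = \<nu> j0 + sum \<nu> (J - {j0})" using j0 less.prems by (simp add: sum.remove)
    have muI0: "0 \<le> sum \<mu> (I - {i0})" using less.prems by (intro sum_nonneg) auto
    have nuJ0: "0 \<le> sum \<nu> (J - {j0})" using less.prems by (intro sum_nonneg) auto
    define ta where "ta = \<rho> i0 * \<mu> i0 / A"
    define tc where "tc = \<sigma> j0 * \<nu> j0 / C"
    have NPhi0: "0 \<le> real (card W) - b * Phi" using NP by simp
    show ?thesis
    proof (cases "ta \<le> tc")
      case True
      define \<tau> where "\<tau> = ta"
      define \<delta> where "\<delta> = \<tau> * C / \<sigma> j0"
      define \<nu>' where "\<nu>' = \<nu>(j0 := \<nu> j0 - \<delta>)"
      define I' where "I' = I - {i0}"
      have tauA: "\<tau> * A = \<mu> i0 * \<rho> i0" unfolding \<tau>_def ta_def using Ap by simp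
      have tau0: "0 \<le> \<tau>" unfolding \<tau>_def ta_def using Ap r0 mu0 by simp
      have tau1: "\<tau> \<le> 1" using tauA Arem Arest Ap
        by (smt (verit, best) mult_le_cancel_right2)
      have dsig: "\<delta> * \<sigma> j0 = \<tau> * C" unfolding \<delta>_def using s0 by simp
      have d0: "0 \<le> \<delta>" unfolding \<delta>_def using tau0 Cp s0 by simp
      have dle: "\<delta> \<le> \<nu> j0"
      proof -
        have "\<tau> * C \<le> tc * C" using True Cp unfolding \<tau>_def by simp
        also have "\<dots> = \<nu> j0 * \<sigma> j0" unfolding tc_def using Cp by simp
        finally have "\<delta> * \<sigma> j0 \<le> \<nu> j0 * \<sigma> j0" using dsig by simp
        then show ?thesis using s0 by simp
      qed
      have A': "(\<Sum>i\<in>I'. \<mu> i * \<rho> i) = (1 - \<tau>) * A"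
        unfolding I'_def using Arem tauA by (simp add: algebra_simps)
      have C': "(\<Sum>j\<in>J. \<nu>' j * \<sigma> j) = (1 - \<tau>) * C"
      proof -
        have "(\<Sum>j\<in>J. \<nu>' j * \<sigma> j) = \<nu>' j0 * \<sigma> j0 + (\<Sum>j\<in>J - {j0}. \<nu>' j * \<sigma> j)"
          using j0 less.prems by (simp add: sum.remove)
        also have "(\<Sum>j\<in>J - {j0}. \<nu>' j * \<sigma> j) = (\<Sum>j\<in>J - {j0}. \<nu> j * \<sigma> j)"
          unfolding \<nu>'_def by (intro sum.cong) auto
        finally show ?thesis using Crem dsig unfolding \<nu>'_def by (simp add: algebra_simps)
      qed
      have smu': "sum \<mu> I' = sum \<mu> I - \<mu> i0" unfolding I'_def using muI by simp
      have snu': "sum \<nu>' J = sum \<nu> J - \<delta>"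
      proof -
        have "sum \<nu>' J = \<nu>' j0 + sum \<nu>' (J - {j0})" using j0 less.prems by (simp add: sum.remove)
        also have "sum \<nu>' (J - {j0}) = sum \<nu> (J - {j0})" unfolding \<nu>'_def by (intro sum.cong) auto
        finally show ?thesis using nuJ unfolding \<nu>'_def by simp
      qed
      define W' where "W' = (\<Union>i\<in>I'. \<Union>j\<in>J. E i j)"
      define Phi' where "Phi' = gm t (sum \<mu> I - \<mu> i0) (sum \<nu> J - \<delta>)"
      have card_lt: "card I' + card J < card I + card J"
        unfolding I'_def using card_Diff1_less[OF less.prems(1) i0(1)] by linarith
      have IH: "b * gm t (\<Sum>i\<in>I'. \<mu> i * \<rho> i) (\<Sum>j\<in>J. \<nu>' j * \<sigma> j)
          + h' * (real (card W') - b * gm t (sum \<mu> I') (sum \<nu>' J)) \<le> sum F W'"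
        unfolding W'_def
        apply (rule less.hyps[OF card_lt])
        using less.prems h'0 h'le d0 dle unfolding I'_def \<nu>'_def by auto
      have Psi': "gm t (\<Sum>i\<in>I'. \<mu> i * \<rho> i) (\<Sum>j\<in>J. \<nu>' j * \<sigma> j) = (1 - \<tau>) * Psi"
        unfolding A' C' Psi_def using tau1 A0 C0 by (intro gm_hom) auto
      have IH2: "b * ((1 - \<tau>) * Psi) + h' * (real (card W') - b * Phi') \<le> sum F W'"
        using IH Psi' unfolding Phi'_def smu' snu' by simp
      have bonus: "h' * gm t (\<mu> i0) \<delta> = \<tau> * Psi"
      proof -
        have "h' * gm t (\<mu> i0) \<delta> = gm t (\<rho> i0 * \<mu> i0) (\<sigma> j0 * \<delta>)"
          unfolding h'_def using r0 s0 mu0 d0 by (simp add: gm_mult)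
        also have "\<dots> = gm t (\<tau> * A) (\<tau> * C)" using tauA dsig by (simp add: mult.commute)
        also have "\<dots> = \<tau> * Psi" unfolding Psi_def using tau0 A0 C0 by (intro gm_hom) auto
        finally show ?thesis .
      qed
      have sup: "Phi' + gm t (\<mu> i0) \<delta> \<le> Phi"
        unfolding Phi'_def Phi_def using gm_superadd[of t "sum \<mu> I - \<mu> i0" "\<mu> i0" "sum \<nu> J - \<delta>" \<delta>]
          t muI muI0 mu0 nuJ nuJ0 dle d0 by (simp add: add.commute)
      have "h' * (Phi' + gm t (\<mu> i0) \<delta>) \<le> h' * Phi" using sup h'0 by (rule mult_left_mono)
      then have hPhi: "h' * Phi' \<le> h' * Phi - \<tau> * Psi" using bonus by (simp add: algebra_simps)
      have bhPhi: "b * (h' * Phi') \<le> b * (h' * Phi - \<tau> * Psi)" using hPhi b by (rule mult_left_mono)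
      have WW: "W' \<subseteq> W" unfolding W'_def W_def I'_def by auto
      have finW': "finite W'" using WW finW finite_subset by auto
      have splitF: "sum F W = sum F W' + sum F (W - W')"
        using WW finW by (metis add.commute sum.subset_diff)
      have "real (card (W - W')) * h' \<le> sum F (W - W')" using Fh' by (intro sum_bounded_below) auto
      moreover have "real (card (W - W')) = real (card W) - real (card W')"
        using WW finW' by (simp add: card_Diff_subset of_nat_diff card_mono finW)
      ultimately have rest: "h' * (real (card W) - real (card W')) \<le> sum F (W - W')" by (simp add: mult.commute)
      have hfin: "h * (real (card W) - b * Phi) \<le> h' * (real (card W) - b * Phi)"
        using hh' NPhi0 by (rule mult_right_mono)
      have "b * Psi + h' * (real (card W) - b * Phi)
          = b * ((1 - \<tau>) * Psi) + h' * real (card W) - b * (h' * Phi - \<tau> * Psi)"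
        by (simp add: algebra_simps)
      also have "\<dots> \<le> b * ((1 - \<tau>) * Psi) + h' * real (card W) - b * (h' * Phi')"
        using bhPhi by simp
      also have "\<dots> = b * ((1 - \<tau>) * Psi) + h' * (real (card W') - b * Phi') + h' * (real (card W) - real (card W'))"
        by (simp add: algebra_simps)
      also have "\<dots> \<le> sum F W" using IH2 rest splitF by simp
      finally have "b * Psi + h' * (real (card W) - b * Phi) \<le> sum F W" .
      then show ?thesis using hfin
        unfolding Phi_def[symmetric] Psi_def[symmetric] A_def[symmetric] C_def[symmetric] W_def[symmetric]
        by simp
    next
      case False
      define \<tau> where "\<tau> = tc"
      define \<delta> where "\<delta> = \<tau> * A / \<rho> i0"
      define \<mu>' where "\<mu>' = \<mu>(i0 := \<mu> i0 - \<delta>)"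
      define J' where "J' = J - {j0}"
      have tauC: "\<tau> * C = \<nu> j0 * \<sigma> j0" unfolding \<tau>_def tc_def using Cp by simp
      have tau0: "0 \<le> \<tau>" unfolding \<tau>_def tc_def using Cp s0 nu0 by simp
      have tau1: "\<tau> \<le> 1" using tauC Crem Crest Cp
        by (smt (verit, best) mult_le_cancel_right2)
      have dsig: "\<delta> * \<rho> i0 = \<tau> * A" unfolding \<delta>_def using r0 by simp
      have d0: "0 \<le> \<delta>" unfolding \<delta>_def using tau0 Ap r0 by simp
      have dle: "\<delta> \<le> \<mu> i0"
      proof -
        have "\<tau> * A \<le> ta * A" using False Ap unfolding \<tau>_def by simp
        also have "\<dots> = \<mu> i0 * \<rho> i0" unfolding ta_def using Ap by simp
        finally have "\<delta> * \<rho> i0 \<le> \<mu> i0 * \<rho> i0" using dsig by simp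
        then show ?thesis using r0 by simp
      qed
      have C': "(\<Sum>j\<in>J'. \<nu> j * \<sigma> j) = (1 - \<tau>) * C"
        unfolding J'_def using Crem tauC by (simp add: algebra_simps)
      have A': "(\<Sum>i\<in>I. \<mu>' i * \<rho> i) = (1 - \<tau>) * A"
      proof -
        have "(\<Sum>i\<in>I. \<mu>' i * \<rho> i) = \<mu>' i0 * \<rho> i0 + (\<Sum>i\<in>I - {i0}. \<mu>' i * \<rho> i)"
          using i0 less.prems by (simp add: sum.remove)
        also have "(\<Sum>i\<in>I - {i0}. \<mu>' i * \<rho> i) = (\<Sum>i\<in>I - {i0}. \<mu> i * \<rho> i)"
          unfolding \<mu>'_def by (intro sum.cong) auto
        finally show ?thesis using Arem dsig unfolding \<mu>'_def by (simp add: algebra_simps)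
      qed
      have snu': "sum \<nu> J' = sum \<nu> J - \<nu> j0" unfolding J'_def using nuJ by simp
      have smu': "sum \<mu>' I = sum \<mu> I - \<delta>"
      proof -
        have "sum \<mu>' I = \<mu>' i0 + sum \<mu>' (I - {i0})" using i0 less.prems by (simp add: sum.remove)
        also have "sum \<mu>' (I - {i0}) = sum \<mu> (I - {i0})" unfolding \<mu>'_def by (intro sum.cong) auto
        finally show ?thesis using muI unfolding \<mu>'_def by simp
      qed
      define W' where "W' = (\<Union>i\<in>I. \<Union>j\<in>J'. E i j)"
      define Phi' where "Phi' = gm t (sum \<mu> I - \<delta>) (sum \<nu> J - \<nu> j0)"
      have card_lt: "card I + card J' < card I + card J"
        unfolding J'_def using card_Diff1_less[OF less.prems(2) j0(1)] by linarith
      have IH: "b * gm t (\<Sum>i\<in>I. \<mu>' i * \<rho> i) (\<Sum>j\<in>J'. \<nu> j * \<sigma> j)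
          + h' * (real (card W') - b * gm t (sum \<mu>' I) (sum \<nu> J')) \<le> sum F W'"
        unfolding W'_def
        apply (rule less.hyps[OF card_lt])
        using less.prems h'0 h'le d0 dle unfolding J'_def \<mu>'_def by auto
      have Psi': "gm t (\<Sum>i\<in>I. \<mu>' i * \<rho> i) (\<Sum>j\<in>J'. \<nu> j * \<sigma> j) = (1 - \<tau>) * Psi"
        unfolding A' C' Psi_def using tau1 A0 C0 by (intro gm_hom) auto
      have IH2: "b * ((1 - \<tau>) * Psi) + h' * (real (card W') - b * Phi') \<le> sum F W'"
        using IH Psi' unfolding Phi'_def smu' snu' by simp
      have bonus: "h' * gm t \<delta> (\<nu> j0) = \<tau> * Psi"
      proof -
        have "h' * gm t \<delta> (\<nu> j0) = gm t (\<rho> i0 * \<delta>) (\<sigma> j0 * \<nu> j0)"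
          unfolding h'_def using r0 s0 nu0 d0 by (simp add: gm_mult)
        also have "\<dots> = gm t (\<tau> * A) (\<tau> * C)" using tauC dsig by (simp add: mult.commute)
        also have "\<dots> = \<tau> * Psi" unfolding Psi_def using tau0 A0 C0 by (intro gm_hom) auto
        finally show ?thesis .
      qed
      have sup: "Phi' + gm t \<delta> (\<nu> j0) \<le> Phi"
        unfolding Phi'_def Phi_def using gm_superadd[of t "sum \<mu> I - \<delta>" \<delta> "sum \<nu> J - \<nu> j0" "\<nu> j0"]
          t muI muI0 nu0 nuJ nuJ0 dle d0 by (simp add: add.commute)
      have "h' * (Phi' + gm t \<delta> (\<nu> j0)) \<le> h' * Phi" using sup h'0 by (rule mult_left_mono)
      then have hPhi: "h' * Phi' \<le> h' * Phi - \<tau> * Psi" using bonus by (simp add: algebra_simps)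
      have bhPhi: "b * (h' * Phi') \<le> b * (h' * Phi - \<tau> * Psi)" using hPhi b by (rule mult_left_mono)
      have WW: "W' \<subseteq> W" unfolding W'_def W_def J'_def by auto
      have finW': "finite W'" using WW finW finite_subset by auto
      have splitF: "sum F W = sum F W' + sum F (W - W')"
        using WW finW by (metis add.commute sum.subset_diff)
      have "real (card (W - W')) * h' \<le> sum F (W - W')" using Fh' by (intro sum_bounded_below) auto
      moreover have "real (card (W - W')) = real (card W) - real (card W')"
        using WW finW' by (simp add: card_Diff_subset of_nat_diff card_mono finW)
      ultimately have rest: "h' * (real (card W) - real (card W')) \<le> sum F (W - W')" by (simp add: mult.commute)
      have hfin: "h * (real (card W) - b * Phi) \<le> h' * (real (card W) - b * Phi)"
        using hh' NPhi0 by (rule mult_right_mono)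
      have "b * Psi + h' * (real (card W) - b * Phi)
          = b * ((1 - \<tau>) * Psi) + h' * real (card W) - b * (h' * Phi - \<tau> * Psi)"
        by (simp add: algebra_simps)
      also have "\<dots> \<le> b * ((1 - \<tau>) * Psi) + h' * real (card W) - b * (h' * Phi')"
        using bhPhi by simp
      also have "\<dots> = b * ((1 - \<tau>) * Psi) + h' * (real (card W') - b * Phi') + h' * (real (card W) - real (card W'))"
        by (simp add: algebra_simps)
      also have "\<dots> \<le> sum F W" using IH2 rest splitF by simp
      finally have "b * Psi + h' * (real (card W) - b * Phi) \<le> sum F W" .
      then show ?thesis using hfin
        unfolding Phi_def[symmetric] Psi_def[symmetric] A_def[symmetric] C_def[symmetric] W_def[symmetric]
        by simp
    qed
  qed
qed


lemma fin_set_mult: "finite X \<Longrightarrow> finite Y \<Longrightarrow> finite (set_mult K X Y)"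
  by (simp add: set_mult_def)

lemma beta_le:
  assumes "A \<subseteq> carrier K" "finite A" "A \<noteq> {}" "B \<subseteq> carrier K" "finite B" "B \<noteq> {}"
  shows "beta K p U \<le> real (card (set_mult K (set_mult K A B) U)) /
           (real (card A) powr (1 / p) * real (card B) powr (1 - 1 / p))"
  unfolding beta_def
  by (rule cINF_lower2[where x="(A, B)"]) (use assms in \<open>auto intro!: bdd_belowI[where m=0]\<close>)

lemma beta_ge:
  assumes "carrier K \<noteq> {}"
    and "\<And>A B. A \<subseteq> carrier K \<Longrightarrow> finite A \<Longrightarrow> A \<noteq> {} \<Longrightarrow> B \<subseteq> carrier K \<Longrightarrow> finite B \<Longrightarrow> B \<noteq> {} \<Longrightarrow>
       c \<le> real (card (set_mult K (set_mult K A B) U)) /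
           (real (card A) powr (1 / p) * real (card B) powr (1 - 1 / p))"
  shows "c \<le> beta K p U"
proof -
  obtain x where "x \<in> carrier K" using assms(1) by auto
  then have "({x}, {x}) \<in> {(A, B). A \<subseteq> carrier K \<and> finite A \<and> A \<noteq> {} \<and> B \<subseteq> carrier K \<and> finite B \<and> B \<noteq> {}}"
    by auto
  then have ne: "{(A, B). A \<subseteq> carrier K \<and> finite A \<and> A \<noteq> {} \<and> B \<subseteq> carrier K \<and> finite B \<and> B \<noteq> {}} \<noteq> {}"
    by blast
  show ?thesis unfolding beta_def
    apply (rule cINF_greatest[OF ne])
    apply clarify
    apply (rule assms(2))
    by auto
qed

lemma beta_nonneg:
  assumes "carrier K \<noteq> {}"
  shows "0 \<le> beta K p U"
  by (rule beta_ge[OF assms]) simp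

lemma beta_mult_le:
  assumes "A \<subseteq> carrier K" "finite A" "A \<noteq> {}" "B \<subseteq> carrier K" "finite B" "B \<noteq> {}"
  shows "beta K p U * gm (1/p) (real (card A)) (real (card B)) \<le> real (card (set_mult K (set_mult K A B) U))"
proof -
  have pos: "0 < gm (1/p) (real (card A)) (real (card B))"
    using assms by (simp add: gm_def card_gt_0_iff)
  show ?thesis using beta_le[OF assms, of p U] pos by (simp add: gm_def pos_le_divide_eq)
qed

theorem mainTheorem8:
  fixes G :: "('a, 'b) monoid_scheme" and H U :: "'a set" and p :: real
  assumes "comm_group G" and "subgroup H G"
    and "U \<subseteq> carrier G" and "finite U" and "U \<noteq> {}"
    and "1 < p"
  shows "beta G p U \<ge>
           beta (G Mod H) p ((\<lambda>u. r_coset G H u) ` U) *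
           Min ((\<lambda>x. beta G p (U \<inter> {u \<in> carrier G. r_coset G H u = x}))
                  ` ((\<lambda>u. r_coset G H u) ` U))"
proof -
  interpret comm_group G by fact
  have mc: "\<And>x y. x \<in> carrier G \<Longrightarrow> y \<in> carrier G \<Longrightarrow> x \<otimes>\<^bsub>G\<^esub> y \<in> carrier G"
    by (rule m_closed)
  interpret subgroup H G by fact
  have nH: "normal H G" using subgroup_imp_normal assms(2) by blast
  interpret normal H G by (rule nH)
  define \<phi> where "\<phi> = (\<lambda>u. r_coset G H u)"
  define V where "V = \<phi> ` U"
  define K where "K = G Mod H"
  define m where "m = Min ((\<lambda>x. beta G p (U \<inter> {u \<in> carrier G. r_coset G H u = x})) ` V)"
  define b where "b = beta K p V"
  define t where "t = 1 / p"
  have t: "0 < t" "t < 1" using assms(6) by (auto simp: t_def)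
  have carrG: "carrier G \<noteq> {}" by auto
  have carrK: "carrier K = rcosets\<^bsub>G\<^esub> H" unfolding K_def by (simp add: FactGroup_def)
  have carrK_ne: "carrier K \<noteq> {}" unfolding carrK using rcosetsI[of H "\<one>\<^bsub>G\<^esub>"] subset by auto
  have multK: "\<And>X Y. monoid.mult K X Y = set_mult G X Y" unfolding K_def by simp
  have smK: "\<And>X Y. set_mult K X Y = (\<Union>h\<in>X. \<Union>k\<in>Y. {set_mult G h k})"
    unfolding set_mult_def[of K] multK by simp
  have phiK: "\<phi> x \<in> carrier K" if "x \<in> carrier G" for x
    unfolding carrK \<phi>_def using that subset by (intro rcosetsI)
  have finV: "finite V" unfolding V_def using assms(4) by simp
  have Vne: "V \<noteq> {}" unfolding V_def using assms(5) by simp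
  have b0: "0 \<le> b" unfolding b_def by (rule beta_nonneg[OF carrK_ne])
  have mle: "m \<le> beta G p (U \<inter> {u \<in> carrier G. r_coset G H u = x})" if "x \<in> V" for x
    unfolding m_def using finV that by (intro Min_le) auto
  have m0: "0 \<le> m" unfolding m_def using finV Vne
    by (subst Min_ge_iff) (auto intro!: beta_nonneg carrG)
  have goal: "b * m \<le> beta G p U"
  proof (cases "m = 0")
    case True
    then show ?thesis using beta_nonneg[OF carrG] by simp
  next
    case False
    then have mpos: "0 < m" using m0 by simp
    show ?thesis
    proof (rule beta_ge[OF carrG])
      fix A B assume A: "A \<subseteq> carrier G" "finite A" "A \<noteq> {}"
        and B: "B \<subseteq> carrier G" "finite B" "B \<noteq> {}"
      define S where "S = set_mult G (set_mult G A B) U"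
      have finS: "finite S" unfolding S_def using A B assms(4) by (intro fin_set_mult)
      define I where "I = \<phi> ` A"
      define J where "J = \<phi> ` B"
      define E where "E = (\<lambda>i j. set_mult K (set_mult K {i} {j}) V)"
      define \<rho> where "\<rho> = (\<lambda>i. real (card {a \<in> A. \<phi> a = i}))"
      define \<sigma> where "\<sigma> = (\<lambda>j. real (card {a \<in> B. \<phi> a = j}))"
      define F where "F = (\<lambda>w. real (card (S \<inter> w)) / m)"
      define W where "W = (\<Union>i\<in>I. \<Union>j\<in>J. E i j)"
      have IK: "I \<subseteq> carrier K" unfolding I_def using A phiK by auto
      have JK: "J \<subseteq> carrier K" unfolding J_def using B phiK by auto
      have finI: "finite I" "finite J" unfolding I_def J_def using A B by auto
      have decomp: "\<exists>u\<in>U. \<forall>a'\<in>A. \<forall>b'\<in>B. \<forall>u'\<in>U. \<phi> a' = i \<longrightarrow> \<phi> b' = j \<longrightarrow> \<phi> u' = \<phi> u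
                  \<longrightarrow> w = \<phi> ((a' \<otimes>\<^bsub>G\<^esub> b') \<otimes>\<^bsub>G\<^esub> u')"
        if wE: "w \<in> E i j" for i j w
      proof -
        obtain u where u: "u \<in> U" "w = set_mult G (set_mult G i j) (\<phi> u)"
          using wE unfolding E_def V_def smK by auto
        show ?thesis
        proof (intro bexI[OF _ u(1)] ballI impI)
          fix a' b' u' assume "a' \<in> A" "b' \<in> B" "u' \<in> U" "\<phi> a' = i" "\<phi> b' = j" "\<phi> u' = \<phi> u"
          note h = this
          have c: "a' \<in> carrier G" "b' \<in> carrier G" "u' \<in> carrier G" using h A B assms(3) by auto
          have "w = set_mult G (set_mult G (\<phi> a') (\<phi> b')) (\<phi> u')" using u h by simp
          also have "\<dots> = \<phi> ((a' \<otimes>\<^bsub>G\<^esub> b') \<otimes>\<^bsub>G\<^esub> u')"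
            unfolding \<phi>_def using c by (simp add: rcos_sum)
          finally show "w = \<phi> ((a' \<otimes>\<^bsub>G\<^esub> b') \<otimes>\<^bsub>G\<^esub> u')" .
        qed
      qed
      have Erep: "\<exists>c\<in>carrier G. w = \<phi> c"
        if ijw: "i \<in> I" "j \<in> J" "w \<in> E i j" for i j w
      proof -
        obtain u where u: "u \<in> U" and hu: "\<forall>a'\<in>A. \<forall>b'\<in>B. \<forall>u'\<in>U. \<phi> a' = i \<longrightarrow> \<phi> b' = j \<longrightarrow> \<phi> u' = \<phi> u
                  \<longrightarrow> w = \<phi> ((a' \<otimes>\<^bsub>G\<^esub> b') \<otimes>\<^bsub>G\<^esub> u')" using decomp[OF ijw(3)] by blast
        obtain a' where "a' \<in> A" "\<phi> a' = i" using ijw(1) unfolding I_def by auto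
        moreover obtain b' where "b' \<in> B" "\<phi> b' = j" using ijw(2) unfolding J_def by auto
        ultimately have "w = \<phi> ((a' \<otimes>\<^bsub>G\<^esub> b') \<otimes>\<^bsub>G\<^esub> u)" using hu u by blast
        moreover have "(a' \<otimes>\<^bsub>G\<^esub> b') \<otimes>\<^bsub>G\<^esub> u \<in> carrier G"
          using \<open>a' \<in> A\<close> \<open>b' \<in> B\<close> u A B assms(3) by (auto intro!: mc)
        ultimately show ?thesis by blast
      qed
      have Wrc: "W \<subseteq> rcosets\<^bsub>G\<^esub> H"
      proof
        fix w assume "w \<in> W"
        then obtain i j where "i \<in> I" "j \<in> J" "w \<in> E i j" unfolding W_def by auto
        then obtain c where "c \<in> carrier G" "w = \<phi> c" using Erep by blast
        then show "w \<in> rcosets\<^bsub>G\<^esub> H" unfolding \<phi>_def using subset by (simp add: rcosetsI)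
      qed
      have finE: "finite (E i j)" for i j unfolding E_def using finV by (intro fin_set_mult) auto
      have finW: "finite W" unfolding W_def using finI finE by auto
      have hyp: "b * gm t (real (card S')) (real (card T')) \<le> real (card (\<Union>i\<in>S'. \<Union>j\<in>T'. E i j))"
        if "S' \<subseteq> I" "T' \<subseteq> J" for S' T'
      proof (cases "S' = {} \<or> T' = {}")
        case True
        then show ?thesis by (auto simp: gm_def)
      next
        case False
        have eq: "(\<Union>i\<in>S'. \<Union>j\<in>T'. E i j) = set_mult K (set_mult K S' T') V"
          unfolding E_def set_mult_def by auto
        have "b * gm t (real (card S')) (real (card T')) \<le> real (card (set_mult K (set_mult K S' T') V))"
          unfolding b_def t_def
          using False that IK JK finI by (intro beta_mult_le) (auto dest: finite_subset)
        then show ?thesis using eq by simp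
      qed
      have rpos: "0 < \<rho> i" if iI: "i \<in> I" for i
      proof -
        obtain a where "a \<in> A" "\<phi> a = i" using iI unfolding I_def by auto
        then show ?thesis unfolding \<rho>_def using A by (auto simp: card_gt_0_iff)
      qed
      have spos: "0 < \<sigma> j" if jJ: "j \<in> J" for j
      proof -
        obtain a where "a \<in> B" "\<phi> a = j" using jJ unfolding J_def by auto
        then show ?thesis unfolding \<sigma>_def using B by (auto simp: card_gt_0_iff)
      qed
      have Fc: "gm t (\<rho> i) (\<sigma> j) \<le> F w" if ijw: "i \<in> I" "j \<in> J" "w \<in> E i j" for i j w
      proof -
        obtain u where u: "u \<in> U" and hu: "\<forall>a'\<in>A. \<forall>b'\<in>B. \<forall>u'\<in>U. \<phi> a' = i \<longrightarrow> \<phi> b' = j \<longrightarrow> \<phi> u' = \<phi> u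
                  \<longrightarrow> w = \<phi> ((a' \<otimes>\<^bsub>G\<^esub> b') \<otimes>\<^bsub>G\<^esub> u')" using decomp[OF ijw(3)] by blast
        define Ai where "Ai = {a \<in> A. \<phi> a = i}"
        define Bj where "Bj = {a \<in> B. \<phi> a = j}"
        define Ux where "Ux = U \<inter> {u' \<in> carrier G. r_coset G H u' = \<phi> u}"
        have Aine: "Ai \<noteq> {}" using ijw(1) unfolding Ai_def I_def by auto
        have Bjne: "Bj \<noteq> {}" using ijw(2) unfolding Bj_def J_def by auto
        have sub: "set_mult G (set_mult G Ai Bj) Ux \<subseteq> S \<inter> w"
        proof
          fix z assume "z \<in> set_mult G (set_mult G Ai Bj) Ux"
          then obtain a' b' u' where z: "a' \<in> Ai" "b' \<in> Bj" "u' \<in> Ux" "z = (a' \<otimes>\<^bsub>G\<^esub> b') \<otimes>\<^bsub>G\<^esub> u'"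
            unfolding set_mult_def by auto
          have "z \<in> S" unfolding S_def set_mult_def using z unfolding Ai_def Bj_def Ux_def by auto
          moreover have "w = \<phi> z" using hu z unfolding Ai_def Bj_def Ux_def \<phi>_def by auto
          moreover have "z \<in> carrier G" using z A B unfolding Ai_def Bj_def Ux_def by (auto intro!: mc)
          ultimately show "z \<in> S \<inter> w" unfolding \<phi>_def using rcos_self assms(2) by auto
        qed
        have "\<phi> u \<in> V" unfolding V_def using u by auto
        then have mb: "m \<le> beta G p Ux" unfolding Ux_def using mle by blast
        have "beta G p Ux * gm t (real (card Ai)) (real (card Bj)) \<le> real (card (set_mult G (set_mult G Ai Bj) Ux))"
          unfolding t_def using A B Aine Bjne unfolding Ai_def Bj_def by (intro beta_mult_le) auto
        also have "\<dots> \<le> real (card (S \<inter> w))" using sub finS by (simp add: card_mono)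
        finally have "m * gm t (real (card Ai)) (real (card Bj)) \<le> real (card (S \<inter> w))"
          using mb gm_nonneg[of t] by (meson mult_right_mono order_trans)
        then show ?thesis unfolding F_def \<rho>_def \<sigma>_def Ai_def Bj_def using mpos
          by (simp add: pos_le_divide_eq mult.commute)
      qed
      have main: "b * gm t (\<Sum>i\<in>I. (\<lambda>_. 1::real) i * \<rho> i) (\<Sum>j\<in>J. (\<lambda>_. 1::real) j * \<sigma> j)
        + 0 * (real (card (\<Union>i\<in>I. \<Union>j\<in>J. E i j)) - b * gm t (sum (\<lambda>_. 1::real) I) (sum (\<lambda>_. 1::real) J))
        \<le> (\<Sum>w\<in>(\<Union>i\<in>I. \<Union>j\<in>J. E i j). F w)"
        by (rule weighted[where I0=I and J0=J, OF t b0 finE hyp rpos spos Fc])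
           (use finI gm_nonneg in auto)
      have sA: "(\<Sum>i\<in>I. \<rho> i) = real (card A)"
      proof -
        have "A = (\<Union>i\<in>I. {a \<in> A. \<phi> a = i})" unfolding I_def by auto
        moreover have "card (\<Union>i\<in>I. {a \<in> A. \<phi> a = i}) = (\<Sum>i\<in>I. card {a \<in> A. \<phi> a = i})"
          by (rule card_UN_disjoint) (use finI(1) A in auto)
        ultimately have "card A = (\<Sum>i\<in>I. card {a \<in> A. \<phi> a = i})" by simp
        then show ?thesis unfolding \<rho>_def by simp
      qed
      have sB: "(\<Sum>j\<in>J. \<sigma> j) = real (card B)"
      proof -
        have "B = (\<Union>i\<in>J. {a \<in> B. \<phi> a = i})" unfolding J_def by auto
        moreover have "card (\<Union>i\<in>J. {a \<in> B. \<phi> a = i}) = (\<Sum>i\<in>J. card {a \<in> B. \<phi> a = i})"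
          by (rule card_UN_disjoint) (use finI(2) B in auto)
        ultimately have "card B = (\<Sum>i\<in>J. card {a \<in> B. \<phi> a = i})" by simp
        then show ?thesis unfolding \<sigma>_def by simp
      qed
      have main2: "b * gm t (real (card A)) (real (card B)) \<le> sum F W"
        using main sA sB unfolding W_def by simp
      have "sum F W = (\<Sum>w\<in>W. real (card (S \<inter> w))) / m"
        unfolding F_def by (simp add: sum_divide_distrib)
      also have "(\<Sum>w\<in>W. real (card (S \<inter> w))) = real (card (\<Union>w\<in>W. S \<inter> w))"
      proof -
        have "card (\<Union>w\<in>W. S \<inter> w) = (\<Sum>w\<in>W. card (S \<inter> w))"
        proof (rule card_UN_disjoint[OF finW])
          show "\<forall>w\<in>W. finite (S \<inter> w)" using finS by auto
          show "\<forall>w\<in>W. \<forall>w'\<in>W. w \<noteq> w' \<longrightarrow> (S \<inter> w) \<inter> (S \<inter> w') = {}"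
            using rcos_disjoint[OF assms(2)] Wrc unfolding pairwise_def disjnt_def by blast
        qed
        then show ?thesis by simp
      qed
      also have "real (card (\<Union>w\<in>W. S \<inter> w)) \<le> real (card S)"
        using finS by (simp add: card_mono)
      finally have "sum F W \<le> real (card S) / m" using mpos by (simp add: divide_right_mono)
      with main2 have "b * gm t (real (card A)) (real (card B)) \<le> real (card S) / m" by linarith
      then have "b * m * gm t (real (card A)) (real (card B)) \<le> real (card S)"
        using mpos by (simp add: pos_le_divide_eq algebra_simps)
      moreover have "0 < gm t (real (card A)) (real (card B))"
        using A B by (simp add: gm_def card_gt_0_iff)
      ultimately show "b * m \<le> real (card (set_mult G (set_mult G A B) U)) /
           (real (card A) powr (1 / p) * real (card B) powr (1 - 1 / p))"
        unfolding S_def by (simp add: gm_def t_def pos_le_divide_eq)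
    qed
  qed
  then show ?thesis unfolding b_def K_def V_def \<phi>_def m_def by simp
qed

end
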